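(* Let $[X,d,m]$ be a metric random walk space with finite invariant measure $\nu$. Then $\Delta_m$ is ergodic if and only if $[X,d,m]$ (with $\nu$) is $m$-connected.
   Context: A metric random walk space $[X,d,m]$ is a Polish metric space $(X,d)$ with a family $m=(m_x)_{x\in X}$ of Borel probability measures, $x\mapsto m_x(A)$ Borel measurable, each with finite first moment. A Radon measure $\nu$ is invariant if $\nu(A)=\int_X m_x(A)d\nu(x)$ for all $\nu$-measurable $A$. Iterates $m_x^{*1}=m_x$, $m_x^{*n}(A)=\int_X m_z(A)dm_x^{*(n-1)}(z)$; $N^m_D=\{x:m_x^{*n}(D)=0\ \forall n\in\mathbb N\}$. The space is $m$-connected if $\nu(N^m_D)=0$ for every $\nu$-measurable $D$ with $0<\nu(D)<\infty$. The Laplacian is $\Delta_m f(x)=\int_X(f(y)-f(x))dm_x(y)$ with domain $L^1(X,\nu)\cap L^2(X,\nu)$; $\Delta_m$ is ergodic if every $u$ in its domain with $\Delta_m u=0$ $\nu$-a.e. is $\nu$-a.e. constant. *)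

theory Defs
  imports "HOL-Probability.Probability"
begin

definition metric_random_walk :: "('a::polish_space \<Rightarrow> 'a measure) \<Rightarrow> bool" where
  "metric_random_walk m \<longleftrightarrow>
     (\<forall>x. prob_space (m x) \<and> sets (m x) = sets borel) \<and>
     (\<forall>A \<in> sets borel. (\<lambda>x. emeasure (m x) A) \<in> borel_measurable borel) \<and>
     (\<forall>x. integrable (m x) (\<lambda>y. dist x y))"

definition radon_measure :: "'a::polish_space measure \<Rightarrow> bool" where
  "radon_measure \<nu> \<longleftrightarrow> sets \<nu> = sets borel \<and>
     (\<forall>x. \<exists>U. open U \<and> x \<in> U \<and> emeasure \<nu> U < \<infinity>) \<and>
     (\<forall>A \<in> sets \<nu>. emeasure \<nu> A = (SUP K \<in> {K. compact K \<and> K \<subseteq> A}. emeasure \<nu> K))"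

definition invariant_measure :: "('a::polish_space \<Rightarrow> 'a measure) \<Rightarrow> 'a measure \<Rightarrow> bool" where
  "invariant_measure m \<nu> \<longleftrightarrow> radon_measure \<nu> \<and>
     (\<forall>A \<in> sets \<nu>. emeasure \<nu> A = (\<integral>\<^sup>+ x. emeasure (m x) A \<partial>\<nu>))"

text \<open>Iterated measures: m_iter m n x is m_x^{*n}; m_iter m 0 x is the Dirac mass at x,
  so m_iter m 1 x = m x.\<close>
primrec m_iter :: "('a::polish_space \<Rightarrow> 'a measure) \<Rightarrow> nat \<Rightarrow> 'a \<Rightarrow> 'a measure" where
  "m_iter m 0 x = return borel x"
| "m_iter m (Suc n) x = bind (m_iter m n x) m"

definition N_set :: "('a::polish_space \<Rightarrow> 'a measure) \<Rightarrow> 'a set \<Rightarrow> 'a set" where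
  "N_set m D = {x. \<forall>n\<ge>1. emeasure (m_iter m n x) D = 0}"

definition m_connected :: "('a::polish_space \<Rightarrow> 'a measure) \<Rightarrow> 'a measure \<Rightarrow> bool" where
  "m_connected m \<nu> \<longleftrightarrow>
     (\<forall>D \<in> sets \<nu>. 0 < emeasure \<nu> D \<and> emeasure \<nu> D < \<infinity> \<longrightarrow> N_set m D \<in> null_sets \<nu>)"

definition laplacian :: "('a::polish_space \<Rightarrow> 'a measure) \<Rightarrow> ('a \<Rightarrow> real) \<Rightarrow> 'a \<Rightarrow> real" where
  "laplacian m f x = (\<integral> y. (f y - f x) \<partial>(m x))"

definition ergodic_laplacian :: "('a::polish_space \<Rightarrow> 'a measure) \<Rightarrow> 'a measure \<Rightarrow> bool" where
  "ergodic_laplacian m \<nu> \<longleftrightarrow>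
     (\<forall>u. integrable \<nu> u \<and> integrable \<nu> (\<lambda>x. (u x)\<^sup>2) \<and>
          (AE x in \<nu>. laplacian m u x = 0) \<longrightarrow> (\<exists>c. AE x in \<nu>. u x = c))"

end

theory Submission imports Defs begin

locale mrw =
  fixes m :: "'a::polish_space \<Rightarrow> 'a measure" and \<nu> :: "'a measure"
  assumes M: "m \<in> measurable borel (subprob_algebra borel)"
  and P: "\<And>x. prob_space (m x)" and S: "\<And>x. sets (m x) = sets borel"
  and S\<nu>: "sets \<nu> = sets borel"
  and inv: "bind \<nu> m = \<nu>"
  and fin: "emeasure \<nu> (space \<nu>) < \<infinity>"
begin

lemma space_nu[simp]: "space \<nu> = UNIV"
  using sets_eq_imp_space_eq[OF S\<nu>] by simp

lemma space_m[simp]: "space (m x) = UNIV"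
  using sets_eq_imp_space_eq[OF S] by simp

lemma meas_nu_iff: "measurable \<nu> N = measurable borel N"
  by (rule measurable_cong_sets[OF S\<nu> refl])

lemma meas_m_iff: "measurable (m x) N = measurable borel N"
  by (rule measurable_cong_sets[OF S refl])

lemma sets_nu_iff: "A \<in> sets \<nu> \<longleftrightarrow> A \<in> sets borel"
  using S\<nu> by simp

lemma iter_meas: "m_iter m n \<in> measurable borel (subprob_algebra borel)"
proof (induction n)
  case 0
  then show ?case by (simp add: return_measurable)
next
  case (Suc n)
  then show ?case using measurable_bind2[OF Suc M] by simp
qed

lemma iter1: "m_iter m (Suc 0) x = m x"
  using bind_return[OF M, of x] by simp

lemma iterCK: "m_iter m (Suc n) x = bind (m x) (m_iter m n)"
proof (induction n arbitrary: x)
  case 0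
  show ?case using iter1 bind_return''[OF S, of x] by simp
next
  case (Suc n)
  have "m_iter m (Suc (Suc n)) x = bind (bind (m x) (m_iter m n)) m"
    using Suc by simp
  also have "\<dots> = bind (m x) (\<lambda>y. bind (m_iter m n y) m)"
    by (rule bind_assoc[OF _ M]) (simp add: meas_m_iff iter_meas)
  also have "\<dots> = bind (m x) (m_iter m (Suc n))"
  proof -
    have e: "(\<lambda>y. bind (m_iter m n y) m) = m_iter m (Suc n)" by (rule ext) simp
    show ?thesis by (simp only: e)
  qed
  finally show ?case .
qed

lemma nn_inv:
  assumes "f \<in> borel_measurable borel"
  shows "(\<integral>\<^sup>+ x. (\<integral>\<^sup>+ y. f y \<partial>m x) \<partial>\<nu>) = (\<integral>\<^sup>+ x. f x \<partial>\<nu>)"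
proof -
  have "(\<integral>\<^sup>+ x. f x \<partial>\<nu>) = (\<integral>\<^sup>+ x. f x \<partial>(bind \<nu> m))" using inv by simp
  also have "\<dots> = (\<integral>\<^sup>+ x. (\<integral>\<^sup>+ y. f y \<partial>m x) \<partial>\<nu>)"
    by (rule nn_integral_bind[OF assms]) (simp add: meas_nu_iff M)
  finally show ?thesis by simp
qed

lemma emeasure_inv:
  assumes "A \<in> sets borel"
  shows "emeasure \<nu> A = (\<integral>\<^sup>+ x. emeasure (m x) A \<partial>\<nu>)"
proof -
  have "emeasure \<nu> A = emeasure (bind \<nu> m) A" using inv by simp
  also have "\<dots> = (\<integral>\<^sup>+ x. emeasure (m x) A \<partial>\<nu>)"
    by (rule emeasure_bind[of \<nu> m borel A]) (auto simp: meas_nu_iff M assms)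
  finally show ?thesis .
qed

lemma iter_emeas_meas: "D \<in> sets borel \<Longrightarrow> (\<lambda>x. emeasure (m_iter m n x) D) \<in> borel_measurable borel"
  by (rule measurable_compose[OF iter_meas measurable_emeasure_subprob_algebra])

lemma m_emeas_meas: "D \<in> sets borel \<Longrightarrow> (\<lambda>x. emeasure (m x) D) \<in> borel_measurable borel"
  by (rule measurable_compose[OF M measurable_emeasure_subprob_algebra])

lemma iter_Suc_emeas: "D \<in> sets borel \<Longrightarrow>
   emeasure (m_iter m (Suc n) x) D = (\<integral>\<^sup>+ y. emeasure (m_iter m n y) D \<partial>m x)"
  unfolding iterCK
  by (rule emeasure_bind) (auto simp: meas_m_iff iter_meas)



lemma L_fm2: "D \<in> sets borel \<Longrightarrow> (\<lambda>x. indicator (-D) x * emeasure (m_iter m n x) D) \<in> borel_measurable borel"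
  using iter_emeas_meas[of D n] by (intro borel_measurable_times_ennreal) auto

lemma L_eq0: "D \<in> sets borel \<Longrightarrow> (\<lambda>x. indicator (-D) x * emeasure (m_iter m 0 x) D) = (\<lambda>x. 0)"
  by (rule ext) (simp split: split_indicator)

lemma L_step:
  assumes D: "D \<in> sets borel" and False: "x \<notin> D" and e: "emeasure (m x) D = 0"
  shows "indicator (-D) x * emeasure (m_iter m (Suc n) x) D
        \<le> (\<integral>\<^sup>+ y. indicator (-D) y * emeasure (m_iter m n y) D \<partial>m x)"
proof -
  have "D \<in> null_sets (m x)" using e S D by (simp add: null_sets_def del: m_iter.simps)
  then have "AE y in m x. y \<notin> D" by (rule AE_not_in)
  then have "AE y in m x. emeasure (m_iter m n y) D
            = indicator (-D) y * emeasure (m_iter m n y) D"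
    by eventually_elim simp
  then have "(\<integral>\<^sup>+ y. emeasure (m_iter m n y) D \<partial>m x)
            = (\<integral>\<^sup>+ y. indicator (-D) y * emeasure (m_iter m n y) D \<partial>m x)"
    by (rule nn_integral_cong_AE)
  moreover have "emeasure (m_iter m (Suc n) x) D = (\<integral>\<^sup>+ y. emeasure (m_iter m n y) D \<partial>m x)"
    by (rule iter_Suc_emeas[OF D])
  ultimately show ?thesis using False by (simp del: m_iter.simps)
qed


lemma level:
  assumes conn: "m_connected m \<nu>" and D[measurable]: "D \<in> sets borel"
    and pos: "emeasure \<nu> D > 0"
    and h: "AE x in \<nu>. x \<notin> D \<longrightarrow> emeasure (m x) D = 0"
  shows "AE x in \<nu>. x \<in> D"
proof -
  have fm2: "(\<lambda>x. indicator (-D) x * emeasure (m_iter m n x) D) \<in> borel_measurable borel" for n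
    by (rule L_fm2[OF D])
  have I: "(\<integral>\<^sup>+ x. indicator (-D) x * emeasure (m_iter m n x) D \<partial>\<nu>) = 0" for n
  proof (induction n)
    case 0
    show ?case by (simp only: L_eq0[OF D]) simp
  next
    case (Suc n)
    have le: "AE x in \<nu>. indicator (-D) x * emeasure (m_iter m (Suc n) x) D
        \<le> (\<integral>\<^sup>+ y. indicator (-D) y * emeasure (m_iter m n y) D \<partial>m x)"
      using h
    proof eventually_elim
      case (elim x)
      show ?case
      proof (cases "x \<in> D")
        case True
        then show ?thesis by (simp del: m_iter.simps)
      next
        case False
        then show ?thesis using elim by (intro L_step[OF D]) auto
      qed
    qed
    have "(\<integral>\<^sup>+ x. indicator (-D) x * emeasure (m_iter m (Suc n) x) D \<partial>\<nu>)
       \<le> (\<integral>\<^sup>+ x. (\<integral>\<^sup>+ y. indicator (-D) y * emeasure (m_iter m n y) D \<partial>m x) \<partial>\<nu>)"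
      by (rule nn_integral_mono_AE[OF le])
    also have "\<dots> = (\<integral>\<^sup>+ x. indicator (-D) x * emeasure (m_iter m n x) D \<partial>\<nu>)"
      by (rule nn_inv[OF fm2])
    finally show ?case using Suc.IH by (simp del: m_iter.simps)
  qed
  have "AE x in \<nu>. indicator (-D) x * emeasure (m_iter m n x) D = 0" for n
  proof -
    have "(\<lambda>x. indicator (-D) x * emeasure (m_iter m n x) D) \<in> borel_measurable \<nu>"
      using fm2[of n] by (simp add: meas_nu_iff)
    then show ?thesis using I[of n] by (simp only: nn_integral_0_iff_AE)
  qed
  then have "AE x in \<nu>. \<forall>n. indicator (-D) x * emeasure (m_iter m n x) D = 0"
    unfolding AE_all_countable by blast
  then have 1: "AE x in \<nu>. x \<notin> D \<longrightarrow> x \<in> N_set m D"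
    by eventually_elim (auto simp: N_set_def simp del: m_iter.simps)
  have "emeasure \<nu> D \<le> emeasure \<nu> (space \<nu>)"
    by (rule emeasure_mono) (auto simp: S\<nu>)
  then have "emeasure \<nu> D < \<infinity>" using fin by simp
  then have "N_set m D \<in> null_sets \<nu>"
    using conn pos D unfolding m_connected_def by (simp add: S\<nu>)
  then have 2: "AE x in \<nu>. x \<notin> N_set m D" by (rule AE_not_in)
  from 1 2 show ?thesis by eventually_elim auto
qed

lemma harm:
  assumes iu: "integrable \<nu> u" and iu2: "integrable \<nu> (\<lambda>x. (u x)\<^sup>2)"
    and lap: "AE x in \<nu>. laplacian m u x = 0"
  shows "AE x in \<nu>. AE y in m x. u y = u x"
proof -
  have um[measurable]: "u \<in> borel_measurable borel"
    using borel_measurable_integrable[OF iu] by (simp add: meas_nu_iff)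
  define Q where "Q x = (\<integral>\<^sup>+ y. ennreal ((u y)\<^sup>2) \<partial>m x)" for x
  define V where "V x = (\<integral>\<^sup>+ y. ennreal ((u y - u x)\<^sup>2) \<partial>m x)" for x
  have Qm: "Q \<in> borel_measurable borel" unfolding Q_def
    by (rule nn_integral_measurable_subprob_algebra2[OF _ M]) measurable
  have Vm: "V \<in> borel_measurable borel" unfolding V_def
    by (rule nn_integral_measurable_subprob_algebra2[OF _ M]) measurable
  have "(\<integral>\<^sup>+ x. ennreal ((u x)\<^sup>2) \<partial>\<nu>) = ennreal (\<integral> x. (u x)\<^sup>2 \<partial>\<nu>)"
    by (rule nn_integral_eq_integral[OF iu2]) simp
  then have u2fin: "(\<integral>\<^sup>+ x. ennreal ((u x)\<^sup>2) \<partial>\<nu>) \<noteq> \<infinity>" by simp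
  have intQ: "(\<integral>\<^sup>+ x. Q x \<partial>\<nu>) = (\<integral>\<^sup>+ x. ennreal ((u x)\<^sup>2) \<partial>\<nu>)"
    unfolding Q_def by (rule nn_inv) measurable
  have "AE x in \<nu>. Q x \<noteq> \<infinity>"
    by (rule nn_integral_PInf_AE) (use Qm intQ u2fin in \<open>auto simp: meas_nu_iff\<close>)
  then have pt: "AE x in \<nu>. V x + ennreal ((u x)\<^sup>2) = Q x" using lap
  proof eventually_elim
    case (elim x)
    interpret p: prob_space "m x" by (rule P)
    have pr: "measure (m x) UNIV = 1" using p.prob_space by simp
    have um': "u \<in> borel_measurable (m x)" by (simp add: meas_m_iff)
    have "(\<integral>\<^sup>+ y. ennreal (norm ((u y)\<^sup>2)) \<partial>m x) = Q x" unfolding Q_def by simp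
    moreover have "(\<lambda>y. (u y)\<^sup>2) \<in> borel_measurable (m x)"
      unfolding meas_m_iff by measurable
    ultimately have i2: "integrable (m x) (\<lambda>y. (u y)\<^sup>2)"
      using elim by (intro integrableI_bounded) (auto simp: less_top)
    have i1: "integrable (m x) u" by (rule p.square_integrable_imp_integrable[OF um' i2])
    have "(\<integral> y. (u y - u x) \<partial>m x) = 0" using elim unfolding laplacian_def by simp
    then have lx: "(\<integral> y. u y \<partial>m x) = u x"
      using i1 by (simp add: integral_diff pr)
    have ex: "(\<lambda>y. (u y - u x)\<^sup>2) = (\<lambda>y. (u y)\<^sup>2 - 2 * u x * u y + (u x)\<^sup>2)"
      by (rule ext) (simp add: power2_eq_square algebra_simps)
    have i3: "integrable (m x) (\<lambda>y. (u y - u x)\<^sup>2)"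
      unfolding ex using i1 i2 by auto
    have "(\<integral> y. (u y - u x)\<^sup>2 \<partial>m x) = (\<integral> y. (u y)\<^sup>2 \<partial>m x) - 2 * u x * (\<integral> y. u y \<partial>m x) + (u x)\<^sup>2"
      unfolding ex using i1 i2 by (simp add: integral_diff integral_add pr)
    then have ival: "(\<integral> y. (u y - u x)\<^sup>2 \<partial>m x) = (\<integral> y. (u y)\<^sup>2 \<partial>m x) - (u x)\<^sup>2"
      using lx by (simp add: power2_eq_square)
    have Vx: "V x = ennreal (\<integral> y. (u y - u x)\<^sup>2 \<partial>m x)"
      unfolding V_def by (rule nn_integral_eq_integral[OF i3]) simp
    have Qx: "Q x = ennreal (\<integral> y. (u y)\<^sup>2 \<partial>m x)"
      unfolding Q_def by (rule nn_integral_eq_integral[OF i2]) simp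
    have nn: "0 \<le> (\<integral> y. (u y - u x)\<^sup>2 \<partial>m x)" by (rule integral_nonneg_AE) simp
    show ?case using nn unfolding Vx Qx ival
      by (simp add: ennreal_plus[symmetric] del: ennreal_plus)
  qed
  have "(\<integral>\<^sup>+ x. ennreal ((u x)\<^sup>2) \<partial>\<nu>) + (\<integral>\<^sup>+ x. V x \<partial>\<nu>)
      = (\<integral>\<^sup>+ x. V x + ennreal ((u x)\<^sup>2) \<partial>\<nu>)"
    by (subst nn_integral_add) (use Vm in \<open>auto simp: meas_nu_iff add.commute\<close>)
  also have "\<dots> = (\<integral>\<^sup>+ x. Q x \<partial>\<nu>)" by (rule nn_integral_cong_AE[OF pt])
  also have "\<dots> = (\<integral>\<^sup>+ x. ennreal ((u x)\<^sup>2) \<partial>\<nu>) + 0" using intQ by simp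
  finally have "(\<integral>\<^sup>+ x. V x \<partial>\<nu>) = 0" using u2fin ennreal_add_left_cancel by blast
  then have "AE x in \<nu>. V x = 0"
    using Vm by (simp add: meas_nu_iff nn_integral_0_iff_AE)
  then show ?thesis
  proof eventually_elim
    case (elim x)
    have "(\<lambda>y. ennreal ((u y - u x)\<^sup>2)) \<in> borel_measurable (m x)"
      by (simp add: meas_m_iff)
    then have "AE y in m x. ennreal ((u y - u x)\<^sup>2) = 0"
      using elim unfolding V_def by (simp add: nn_integral_0_iff_AE)
    then show ?case by eventually_elim simp
  qed
qed

lemma upper:
  fixes w :: "'a \<Rightarrow> real"
  assumes conn: "m_connected m \<nu>" and wm[measurable]: "w \<in> borel_measurable borel"
    and H: "AE x in \<nu>. AE y in m x. w y = w x"
    and c: "emeasure \<nu> {x. c < w x} > 0"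
  shows "AE x in \<nu>. c < w x"
proof -
  have D[measurable]: "{x. c < w x} \<in> sets borel"
    using borel_measurable_iff_greater[of w borel] wm by simp
  have h: "AE x in \<nu>. x \<notin> {x. c < w x} \<longrightarrow> emeasure (m x) {x. c < w x} = 0"
    using H
  proof eventually_elim
    case (elim x)
    show ?case
    proof
      assume "x \<notin> {x. c < w x}"
      then have nx: "\<not> c < w x" by simp
      have "AE y in m x. \<not> c < w y" using elim by (rule eventually_mono) (use nx in simp)
      then show "emeasure (m x) {x. c < w x} = 0"
        by (subst (asm) AE_iff_measurable[where N="{x. c < w x}"]) (auto simp: S)
    qed
  qed
  have "AE x in \<nu>. x \<in> {x. c < w x}" by (rule level[OF conn D c h])
  then show ?thesis by simp
qed

lemma le_mean:
  fixes w :: "'a \<Rightarrow> real"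
  assumes conn: "m_connected m \<nu>" and iw: "integrable \<nu> w"
    and H: "AE x in \<nu>. AE y in m x. w y = w x"
    and c: "(\<integral> x. w x \<partial>\<nu>) = measure \<nu> (space \<nu>) * c"
    and ne: "emeasure \<nu> (space \<nu>) \<noteq> 0"
  shows "AE x in \<nu>. w x \<le> c"
proof (rule ccontr)
  assume na: "\<not> (AE x in \<nu>. w x \<le> c)"
  have wm[measurable]: "w \<in> borel_measurable borel"
    using borel_measurable_integrable[OF iw] by (simp add: meas_nu_iff)
  have D: "{x. c < w x} \<in> sets \<nu>" by (simp add: S\<nu>)
  have "emeasure \<nu> {x. c < w x} \<noteq> 0"
    using na by (subst (asm) AE_iff_measurable[OF D]) auto
  then have "AE x in \<nu>. c < w x" by (intro upper[OF conn wm H]) (simp add: zero_less_iff_neq_zero)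
  moreover
  have i: "integrable \<nu> (\<lambda>x. w x - c)" using iw fin by (intro Bochner_Integration.integrable_diff) (auto intro!: finite_measure.integrable_const finite_measureI)
  have "(\<integral> x. w x - c \<partial>\<nu>) = 0" using iw fin c
    by (subst Bochner_Integration.integral_diff) (auto intro!: finite_measure.integrable_const finite_measureI)
  moreover have "AE x in \<nu>. 0 \<le> w x - c" using calculation(1) by eventually_elim simp
  ultimately have "AE x in \<nu>. False"
    using integral_nonneg_eq_0_iff_AE[OF i] by (auto elim: AE_mp)
  then have "emeasure \<nu> (space \<nu>) = 0"
    by (subst (asm) AE_iff_measurable[where N="space \<nu>"]) (auto simp: S\<nu>)
  then show False using ne by simp
qed

lemma erg_of_conn:
  assumes conn: "m_connected m \<nu>"
  shows "ergodic_laplacian m \<nu>"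
  unfolding ergodic_laplacian_def
proof (intro allI impI, elim conjE)
  fix u assume iu: "integrable \<nu> u" and iu2: "integrable \<nu> (\<lambda>x. (u x)\<^sup>2)"
    and lap: "AE x in \<nu>. laplacian m u x = 0"
  have H: "AE x in \<nu>. AE y in m x. u y = u x" by (rule harm[OF iu iu2 lap])
  show "\<exists>c. AE x in \<nu>. u x = c"
  proof (cases "emeasure \<nu> (space \<nu>) = 0")
    case True
    then have "AE x in \<nu>. False"
      by (subst AE_iff_measurable[where N="space \<nu>"]) (auto simp: S\<nu>)
    then show ?thesis by (auto elim: AE_mp)
  next
    case False
    have mpos: "measure \<nu> (space \<nu>) \<noteq> 0"
      using False fin by (simp add: measure_def enn2real_eq_0_iff)
    define c where "c = (\<integral> x. u x \<partial>\<nu>) / measure \<nu> (space \<nu>)"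
    have c1: "(\<integral> x. u x \<partial>\<nu>) = measure \<nu> (space \<nu>) * c" using mpos unfolding c_def by simp
    have "AE x in \<nu>. u x \<le> c" by (rule le_mean[OF conn iu H c1 False])
    moreover have "AE x in \<nu>. - u x \<le> - c"
      by (rule le_mean[OF conn]) (use iu H c1 False in \<open>auto\<close>)
    ultimately have "AE x in \<nu>. u x = c" by eventually_elim simp
    then show ?thesis by blast
  qed
qed


lemma Nset_meas:
  assumes D[measurable]: "D \<in> sets borel"
  shows "N_set m D \<in> sets borel"
proof -
  have [measurable]: "(\<lambda>x. emeasure (m_iter m n x) D) \<in> borel_measurable borel" for n
    by (rule iter_emeas_meas[OF D])
  have "N_set m D = {x \<in> space borel. \<forall>n. 1 \<le> n \<longrightarrow> emeasure (m_iter m n x) D = 0}"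
    by (auto simp: N_set_def simp del: m_iter.simps)
  also have "\<dots> \<in> sets borel" by measurable
  finally show ?thesis .
qed

lemma N_one:
  assumes D: "D \<in> sets borel" and x: "x \<in> N_set m D"
  shows "emeasure (m x) (N_set m D) = 1"
proof -
  interpret p: prob_space "m x" by (rule P)
  have all: "\<forall>k\<ge>1. emeasure (m_iter m k x) D = 0"
    using x by (simp add: N_set_def del: m_iter.simps)
  have A: "AE y in m x. emeasure (m_iter m n y) D = 0" for n
  proof -
    have "emeasure (m_iter m (Suc n) x) D = 0" using all by (simp del: m_iter.simps)
    then have "(\<integral>\<^sup>+ y. emeasure (m_iter m n y) D \<partial>m x) = 0"
      using iter_Suc_emeas[OF D] by (simp del: m_iter.simps)
    moreover have "(\<lambda>y. emeasure (m_iter m n y) D) \<in> borel_measurable (m x)"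
      using iter_emeas_meas[OF D] by (simp add: meas_m_iff)
    ultimately show ?thesis by (simp add: nn_integral_0_iff_AE)
  qed
  then have "AE y in m x. \<forall>n. emeasure (m_iter m n y) D = 0"
    unfolding AE_all_countable by blast
  then have "AE y in m x. y \<in> N_set m D"
    by eventually_elim (simp add: N_set_def del: m_iter.simps)
  moreover have "N_set m D \<in> sets (m x)" using Nset_meas[OF D] by (simp add: S)
  ultimately have "measure (m x) (N_set m D) = 1" using p.AE_in_set_eq_1 by simp
  then show ?thesis by (simp add: p.emeasure_eq_measure)
qed

lemma conn_of_erg:
  assumes erg: "ergodic_laplacian m \<nu>"
  shows "m_connected m \<nu>"
  unfolding m_connected_def
proof (intro ballI impI, elim conjE)
  fix D assume D\<nu>: "D \<in> sets \<nu>" and pos: "0 < emeasure \<nu> D" and Dfin: "emeasure \<nu> D < \<infinity>"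
  have D[measurable]: "D \<in> sets borel" using D\<nu> S\<nu> by simp
  define N where "N = N_set m D"
  have Nm[measurable]: "N \<in> sets borel" unfolding N_def by (rule Nset_meas[OF D])
  have Nf: "emeasure \<nu> N < \<infinity>"
    using emeasure_mono[of N "space \<nu>" \<nu>] fin by (auto simp: S\<nu>)
  show "N_set m D \<in> null_sets \<nu>"
  proof (rule ccontr)
    assume nn: "N_set m D \<notin> null_sets \<nu>"
    have "N_set m D \<in> sets \<nu>" using Nset_meas[OF D] S\<nu> by simp
    then have Npos: "emeasure \<nu> N \<noteq> 0" using nn unfolding N_def by (simp add: null_sets_def)
    have one: "x \<in> N \<Longrightarrow> emeasure (m x) N = 1" for x
      unfolding N_def by (rule N_one[OF D])
    have mN[measurable]: "(\<lambda>x. emeasure (m x) N) \<in> borel_measurable borel" by (rule m_emeas_meas[OF Nm])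
    have split: "emeasure (m x) N = indicator N x + indicator (-N) x * emeasure (m x) N" for x
      using one[of x] by (cases "x \<in> N") auto
    have "emeasure \<nu> N = (\<integral>\<^sup>+ x. emeasure (m x) N \<partial>\<nu>)" by (rule emeasure_inv[OF Nm])
    also have "\<dots> = (\<integral>\<^sup>+ x. indicator N x \<partial>\<nu>) + (\<integral>\<^sup>+ x. indicator (-N) x * emeasure (m x) N \<partial>\<nu>)"
      by (subst split, rule nn_integral_add) (auto simp: meas_nu_iff)
    also have "(\<integral>\<^sup>+ x. indicator N x \<partial>\<nu>) = emeasure \<nu> N" using Nm by (simp add: S\<nu>)
    finally have "emeasure \<nu> N + 0 = emeasure \<nu> N + (\<integral>\<^sup>+ x. indicator (-N) x * emeasure (m x) N \<partial>\<nu>)"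
      by simp
    then have "(\<integral>\<^sup>+ x. indicator (-N) x * emeasure (m x) N \<partial>\<nu>) = 0"
      using Nf ennreal_add_left_cancel by (metis less_irrefl)
    then have "AE x in \<nu>. indicator (-N) x * emeasure (m x) N = 0"
      by (subst (asm) nn_integral_0_iff_AE) (auto simp: meas_nu_iff)
    then have off: "AE x in \<nu>. x \<notin> N \<longrightarrow> emeasure (m x) N = 0"
      by eventually_elim (auto simp: indicator_def)
    define u :: "'a \<Rightarrow> real" where "u = indicator N"
    have iu: "integrable \<nu> u" unfolding u_def using Nm Nf by (simp add: S\<nu>)
    have sq: "(\<lambda>x. (u x)\<^sup>2) = u" unfolding u_def by (rule ext) (simp split: split_indicator)
    have lap: "AE x in \<nu>. laplacian m u x = 0"
      using off
    proof eventually_elim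
      case (elim x)
      interpret p: prob_space "m x" by (rule P)
      have pr: "measure (m x) UNIV = 1" using p.prob_space by simp
      have iN: "integrable (m x) u" unfolding u_def
        using Nm by (intro integrable_real_indicator) (auto simp: S less_top[symmetric] p.emeasure_finite)
      have "laplacian m u x = measure (m x) N - u x"
        unfolding laplacian_def using iN by (simp add: Bochner_Integration.integral_diff pr u_def)
      also have "\<dots> = 0"
      proof (cases "x \<in> N")
        case True
        then show ?thesis using one[OF True] by (simp add: p.emeasure_eq_measure u_def)
      next
        case False
        then show ?thesis using elim by (simp add: p.emeasure_eq_measure u_def)
      qed
      finally show ?case .
    qed
    obtain c where c: "AE x in \<nu>. u x = c"
      using erg iu sq lap unfolding ergodic_laplacian_def by metis
    have "AE x in \<nu>. x \<in> N"
    proof (cases "c = 1")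
      case True
      show ?thesis using c by (rule eventually_mono) (use True in \<open>simp add: u_def indicator_def split: if_splits\<close>)
    next
      case False
      have "AE x in \<nu>. x \<notin> N" using c by (rule eventually_mono) (use False in \<open>auto simp: u_def\<close>)
      then have "emeasure \<nu> N = 0"
        by (subst (asm) AE_iff_measurable[where N=N]) (auto simp: S\<nu>)
      then show ?thesis using Npos by simp
    qed
    then have "AE x in \<nu>. emeasure (m x) D = 0"
    proof eventually_elim
      case (elim x)
      then have "emeasure (m_iter m (Suc 0) x) D = 0"
        unfolding N_def N_set_def by (simp del: m_iter.simps)
      then show ?case by (simp only: iter1)
    qed
    then have "(\<integral>\<^sup>+ x. emeasure (m x) D \<partial>\<nu>) = 0"
      using m_emeas_meas[OF D] by (simp add: meas_nu_iff nn_integral_0_iff_AE)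
    then have "emeasure \<nu> D = 0" using emeasure_inv[OF D] by simp
    then show False using pos by simp
  qed
qed

end

lemma mrw_intro:
  assumes "metric_random_walk m" and "invariant_measure m \<nu>"
    and "emeasure \<nu> (space \<nu>) < \<infinity>"
  shows "mrw m \<nu>"
proof -
  have P: "\<And>x. prob_space (m x)" and S: "\<And>x. sets (m x) = sets borel"
    and Mm: "\<And>A. A \<in> sets borel \<Longrightarrow> (\<lambda>x. emeasure (m x) A) \<in> borel_measurable borel"
    using assms(1) unfolding metric_random_walk_def by auto
  have M: "m \<in> measurable borel (subprob_algebra borel)"
    by (rule measurable_subprob_algebra) (auto simp: P S Mm prob_space_imp_subprob_space)
  have S\<nu>: "sets \<nu> = sets borel" and inv: "\<And>A. A \<in> sets \<nu> \<Longrightarrow> emeasure \<nu> A = (\<integral>\<^sup>+ x. emeasure (m x) A \<partial>\<nu>)"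
    using assms(2) unfolding invariant_measure_def radon_measure_def by auto
  have sp: "space \<nu> = UNIV" using sets_eq_imp_space_eq[OF S\<nu>] by simp
  have M\<nu>: "m \<in> measurable \<nu> (subprob_algebra borel)"
  proof -
    have e: "measurable \<nu> (subprob_algebra borel) = measurable borel (subprob_algebra borel)"
      by (rule measurable_cong_sets[OF S\<nu> refl])
    show ?thesis unfolding e by (rule M)
  qed
  have sb: "sets (bind \<nu> m) = sets borel"
    by (rule sets_bind) (auto simp: S sp)
  have "bind \<nu> m = \<nu>"
  proof (rule measure_eqI)
    show "sets (bind \<nu> m) = sets \<nu>" using sb S\<nu> by simp
    fix A assume "A \<in> sets (bind \<nu> m)"
    then have A: "A \<in> sets borel" using sb by simp
    have eb: "emeasure (bind \<nu> m) A = (\<integral>\<^sup>+ x. emeasure (m x) A \<partial>\<nu>)"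
      by (rule emeasure_bind[OF _ M\<nu> A]) (simp add: sp)
    have "A \<in> sets \<nu>" using A S\<nu> by simp
    then show "emeasure (bind \<nu> m) A = emeasure \<nu> A"
      unfolding eb by (rule inv[symmetric])
  qed
  then show ?thesis using P S M S\<nu> assms(3) unfolding mrw_def by blast
qed

theorem theorem2p21:
  fixes m :: "'a::polish_space \<Rightarrow> 'a measure" and \<nu> :: "'a measure"
  assumes "metric_random_walk m"
    and "invariant_measure m \<nu>"
    and "emeasure \<nu> (space \<nu>) < \<infinity>"
  shows "ergodic_laplacian m \<nu> \<longleftrightarrow> m_connected m \<nu>"
proof -
  interpret mrw m \<nu> by (rule mrw_intro[OF assms])
  show ?thesis using conn_of_erg erg_of_conn by blast
qed

end
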